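(* Let $S$ be a semigroup and $a\in S$ an idempotent such that every element of $\{a\}\cup aSa$ has exactly one inverse in $S$. Then $\operatorname{Reg}(Sa)=P=aSa$, where $P=\{x\in Sa: x\,\mathscr L\,ax\}$, and this is an inverse monoid.
   Context: An inverse of $x\in S$ is $y\in S$ with $x=xyx$ and $y=yxy$. $\operatorname{Reg}(Sa)$ is the set of regular elements of the semigroup $Sa=\{xa:x\in S\}$; $aSa=\{axa:x\in S\}$. $\mathscr L$ is Green's $\mathscr L$-relation on $S$. A semigroup is inverse if every element has exactly one inverse in it. *)

theory Defs
  imports Main
begin

text \<open>The semigroup S is the whole carrier of a type of class semigroup_mult.\<close>

definition is_inverse :: "'a::semigroup_mult \<Rightarrow> 'a \<Rightarrow> bool" where
  "is_inverse x y \<longleftrightarrow> x = x * y * x \<and> y = y * x * y"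

definition left_ideal1 :: "'a::semigroup_mult \<Rightarrow> 'a set" where
  "left_ideal1 x = insert x {u * x | u. True}"

definition greenL :: "'a::semigroup_mult \<Rightarrow> 'a \<Rightarrow> bool" where
  "greenL x y \<longleftrightarrow> left_ideal1 x = left_ideal1 y"

definition left_mult_set :: "'a::semigroup_mult \<Rightarrow> 'a set" where
  "left_mult_set a = {x * a | x. True}"

definition sandwich_set :: "'a::semigroup_mult \<Rightarrow> 'a set" where
  "sandwich_set a = {a * x * a | x. True}"

definition Reg :: "'a::semigroup_mult set \<Rightarrow> 'a set" where
  "Reg T = {x \<in> T. \<exists>y\<in>T. x = x * y * x}"

definition inverse_monoid_on :: "'a::semigroup_mult set \<Rightarrow> bool" where
  "inverse_monoid_on T \<longleftrightarrow>
     (\<forall>x\<in>T. \<forall>y\<in>T. x * y \<in> T) \<and>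
     (\<exists>e\<in>T. \<forall>x\<in>T. e * x = x \<and> x * e = x) \<and>
     (\<forall>x\<in>T. \<exists>!y. y \<in> T \<and> is_inverse x y)"

end

theory Submission
  imports Defs
begin

lemma inv_in_sandwich:
  fixes a :: "'a::semigroup_mult"
  assumes idem: "a * a = a"
    and uniq: "\<forall>x \<in> insert a (sandwich_set a). \<exists>!y. is_inverse x y"
    and x: "x \<in> sandwich_set a"
  obtains y where "is_inverse x y" "y = a * y * a"
proof -
  obtain s where xs: "x = a * s * a" using x unfolding sandwich_set_def by auto
  have xa: "x * a = x" using xs idem by (metis mult.assoc)
  have ax: "a * x = x" using xs idem by (metis mult.assoc)
  obtain y where y: "is_inverse x y" using uniq x by blast
  have "is_inverse x (a * y * a)"
  proof -
    have "x * (a * y * a) * x = x * y * x"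
      by (metis ax xa mult.assoc)
    moreover have "a * y * a * x * (a * y * a) = a * (y * x * y) * a"
      by (metis ax xa mult.assoc)
    ultimately show ?thesis using y unfolding is_inverse_def by simp
  qed
  with y uniq x have "y = a * y * a" by blast
  with y that show ?thesis by blast
qed

lemma key:
  fixes a :: "'a::semigroup_mult"
  assumes idem: "a * a = a"
    and uniq: "\<forall>x \<in> insert a (sandwich_set a). \<exists>!y. is_inverse x y"
    and xa: "x * a = x"
    and xl: "x \<in> left_ideal1 (a * x)"
  shows "a * x = x"
proof -
  define b where "b = a * x"
  have bs: "b \<in> sandwich_set a" unfolding b_def sandwich_set_def
    by (rule CollectI, rule exI[of _ x], metis xa mult.assoc)
  obtain y where y: "is_inverse b y" and yaya: "y = a * y * a"
    using inv_in_sandwich[OF idem uniq bs] by blast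
  have ya: "y * a = y" by (metis yaya idem mult.assoc)
  have ay: "a * y = y" by (metis yaya idem mult.assoc)
  have bdef: "b = b * y * b" "y = y * b * y" using y unfolding is_inverse_def by auto
  have xyb: "x * y * b = x"
  proof -
    from xl have "x = b \<or> (\<exists>u. x = u * b)" unfolding left_ideal1_def b_def by auto
    then show ?thesis
    proof
      assume "x = b" then show ?thesis using bdef by simp
    next
      assume "\<exists>u. x = u * b"
      then obtain u where "x = u * b" by blast
      then show ?thesis using bdef by (metis mult.assoc)
    qed
  qed
  have xyx: "x * y * x = x" using xyb ya unfolding b_def by (metis mult.assoc)
  define f where "f = x * y"
  have ff: "f * f = f" unfolding f_def using xyx by (metis mult.assoc)
  have fa: "f * a = f" unfolding f_def using ya by (metis mult.assoc)
  have afs: "a * f \<in> sandwich_set a" unfolding sandwich_set_def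
    by (rule CollectI, rule exI[of _ f], metis fa mult.assoc)
  have afaf: "a * f * (a * f) = a * f" using fa ff by (metis mult.assoc)
  have i1: "is_inverse (a * f) (a * f)" unfolding is_inverse_def using afaf by (metis mult.assoc)
  have i2: "is_inverse (a * f) f" unfolding is_inverse_def using fa ff afaf by (metis mult.assoc)
  have "f = a * f" using uniq afs i1 i2 by blast
  then have "x = a * x" using xyx unfolding f_def by (metis mult.assoc)
  then show ?thesis by simp
qed

theorem theorem3p33:
  fixes a :: "'a::semigroup_mult"
  assumes idem: "a * a = a"
    and uniq: "\<forall>x \<in> insert a (sandwich_set a). \<exists>!y. is_inverse x y"
  defines "P \<equiv> {x \<in> left_mult_set a. greenL x (a * x)}"
  shows "Reg (left_mult_set a) = P \<and> P = sandwich_set a \<and> inverse_monoid_on (sandwich_set a)"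
proof -
  have sub: "sandwich_set a \<subseteq> left_mult_set a"
    unfolding sandwich_set_def left_mult_set_def by blast
  have sa: "x * a = x" if "x \<in> left_mult_set a" for x
    using that idem unfolding left_mult_set_def by (auto simp: mult.assoc)
  have as: "x \<in> sandwich_set a \<Longrightarrow> a * x = x \<and> x * a = x" for x
    using idem unfolding sandwich_set_def by (auto, metis mult.assoc, metis mult.assoc)
  have PS: "P = sandwich_set a"
  proof
    show "P \<subseteq> sandwich_set a"
    proof
      fix x assume "x \<in> P"
      then have x1: "x \<in> left_mult_set a" and g: "greenL x (a * x)" unfolding P_def by auto
      have "x \<in> left_ideal1 (a * x)" using g unfolding greenL_def left_ideal1_def by auto
      then have "a * x = x" using key[OF idem uniq sa[OF x1]] by blast
      then have "x = a * x * a" using sa[OF x1] by simp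
      then show "x \<in> sandwich_set a" unfolding sandwich_set_def by blast
    qed
  next
    show "sandwich_set a \<subseteq> P"
      using sub as unfolding P_def greenL_def by auto
  qed
  have RS: "Reg (left_mult_set a) = sandwich_set a"
  proof
    show "Reg (left_mult_set a) \<subseteq> sandwich_set a"
    proof
      fix x assume "x \<in> Reg (left_mult_set a)"
      then obtain z where x1: "x \<in> left_mult_set a" and z: "z \<in> left_mult_set a"
        and xzx: "x = x * z * x" unfolding Reg_def by auto
      obtain t where zt: "z = t * a" using z unfolding left_mult_set_def by auto
      have "x = (x * t) * (a * x)" using xzx zt by (simp add: mult.assoc)
      then have "x \<in> left_ideal1 (a * x)" unfolding left_ideal1_def by blast
      then have "a * x = x" using key[OF idem uniq sa[OF x1]] by blast
      then have "x = a * x * a" using sa[OF x1] by simp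
      then show "x \<in> sandwich_set a" unfolding sandwich_set_def by blast
    qed
  next
    show "sandwich_set a \<subseteq> Reg (left_mult_set a)"
    proof
      fix x assume x: "x \<in> sandwich_set a"
      obtain y where y: "is_inverse x y" "y = a * y * a"
        using inv_in_sandwich[OF idem uniq x] by blast
      have "y \<in> sandwich_set a" using y(2) unfolding sandwich_set_def by blast
      then show "x \<in> Reg (left_mult_set a)" using x sub y(1)
        unfolding Reg_def is_inverse_def by blast
    qed
  qed
  have IM: "inverse_monoid_on (sandwich_set a)"
    unfolding inverse_monoid_on_def
  proof (intro conjI ballI)
    fix x y assume "x \<in> sandwich_set a" "y \<in> sandwich_set a"
    then obtain s t where "x = a * s * a" "y = a * t * a" unfolding sandwich_set_def by auto
    then have "x * y = a * (s * a * a * t) * a" by (simp add: mult.assoc)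
    then show "x * y \<in> sandwich_set a" unfolding sandwich_set_def by blast
  next
    have "a \<in> sandwich_set a" unfolding sandwich_set_def
      by (rule CollectI, rule exI[of _ a], simp add: idem)
    then show "\<exists>e\<in>sandwich_set a. \<forall>x\<in>sandwich_set a. e * x = x \<and> x * e = x"
      using as by blast
  next
    fix x assume x: "x \<in> sandwich_set a"
    obtain y where y: "is_inverse x y" "y = a * y * a"
      using inv_in_sandwich[OF idem uniq x] by blast
    have "y \<in> sandwich_set a" using y(2) unfolding sandwich_set_def by blast
    then show "\<exists>!y. y \<in> sandwich_set a \<and> is_inverse x y" using y(1) uniq x by blast
  qed
  show ?thesis using PS RS IM by simp
qed

end
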